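(* The proximity pre-order $\preceq^{\mathrm{edit\text{-}dist}}$ is well-founded and has the finite-basis property.
   Context: CQs are $q(x_1,\dots,x_k)\text{ :- }\alpha_1,\dots,\alpha_n$ (relational atoms, no constants, pairwise distinct answer variables each occurring in an atom) over a fixed finite schema. Canonical example $e_q=(I_q,(x_1,\dots,x_k))$ with facts the atoms of $q$; $\mathrm{core}(e)$ is the core of a data example (the minimal homomorphically equivalent sub-example, unique up to isomorphism). $\mathrm{edit\text{-}dist}(q_1,q_2)=\min_\rho|\mathrm{core}(e_{q_1})\oplus\mathrm{core}(e_{\rho(q_2)})|$ over bijective renamings $\rho$ of the variables of $q_2(y_1,\dots,y_k)$ with $\rho(y_i)=x_i$, $\oplus$ symmetric difference of facts. $q'\preceq^{\mathrm{edit\text{-}dist}}_q q''$ iff $\mathrm{edit\text{-}dist}(q,q')\le\mathrm{edit\text{-}dist}(q,q'')$; $\prec_q$ is the strict part. A proximity pre-order $\preceq$ is well-founded if for each CQ $q$, every non-empty set of CQs has a $\preceq_q$-minimal element; it has the finite-basis property if for each CQ $q$, every set of CQs has only finitely many $\preceq_q$-minimal elements up to equivalence (equivalence: same answers on every instance). *)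

theory Defs
  imports Main
begin

(* Schema: relation symbols of a finite type 'r, with arity function ar.
   Variables / values: nat.  A fact / atom is (R, argument list). *)
type_synonym 'r fact = "'r \<times> nat list"

(* A CQ q(x_1..x_k) :- atoms  is represented as (answer variable list, set of atoms). *)
type_synonym 'r cq = "nat list \<times> 'r fact set"

definition cq_ans :: "'r cq \<Rightarrow> nat list" where "cq_ans q = fst q"
definition cq_atoms :: "'r cq \<Rightarrow> 'r fact set" where "cq_atoms q = snd q"

definition wf_fact :: "('r \<Rightarrow> nat) \<Rightarrow> 'r fact \<Rightarrow> bool" where
  "wf_fact ar f \<longleftrightarrow> length (snd f) = ar (fst f)"

definition wf_instance :: "('r \<Rightarrow> nat) \<Rightarrow> 'r fact set \<Rightarrow> bool" where
  "wf_instance ar I \<longleftrightarrow> finite I \<and> (\<forall>f\<in>I. wf_fact ar f)"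

definition is_cq :: "('r \<Rightarrow> nat) \<Rightarrow> 'r cq \<Rightarrow> bool" where
  "is_cq ar q \<longleftrightarrow> wf_instance ar (cq_atoms q) \<and> distinct (cq_ans q)
     \<and> (\<forall>x\<in>set (cq_ans q). \<exists>f\<in>cq_atoms q. x \<in> set (snd f))"

definition arity :: "'r cq \<Rightarrow> nat" where "arity q = length (cq_ans q)"

definition vars :: "'r cq \<Rightarrow> nat set" where
  "vars q = set (cq_ans q) \<union> (\<Union>f\<in>cq_atoms q. set (snd f))"

definition map_fact :: "(nat \<Rightarrow> nat) \<Rightarrow> 'r fact \<Rightarrow> 'r fact" where
  "map_fact h f = (fst f, map h (snd f))"

definition is_hom :: "(nat \<Rightarrow> nat) \<Rightarrow> 'r fact set \<Rightarrow> nat list \<Rightarrow> 'r fact set \<Rightarrow> nat list \<Rightarrow> bool" where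
  "is_hom h I a J b \<longleftrightarrow> map h a = b \<and> map_fact h ` I \<subseteq> J"

definition hom_equiv :: "'r fact set \<Rightarrow> nat list \<Rightarrow> 'r fact set \<Rightarrow> nat list \<Rightarrow> bool" where
  "hom_equiv I a J b \<longleftrightarrow> (\<exists>h. is_hom h I a J b) \<and> (\<exists>h. is_hom h J b I a)"

definition is_core_of :: "'r fact set \<Rightarrow> 'r fact set \<Rightarrow> nat list \<Rightarrow> bool" where
  "is_core_of C I a \<longleftrightarrow> C \<subseteq> I \<and> hom_equiv C a I a
     \<and> (\<forall>C'. C' \<subset> C \<longrightarrow> \<not> hom_equiv C' a I a)"

definition core_of_cq :: "'r fact set \<Rightarrow> 'r cq \<Rightarrow> bool" where
  "core_of_cq C q \<longleftrightarrow> is_core_of C (cq_atoms q) (cq_ans q)"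

definition rename_cq :: "(nat \<Rightarrow> nat) \<Rightarrow> 'r cq \<Rightarrow> 'r cq" where
  "rename_cq \<rho> q = (map \<rho> (cq_ans q), map_fact \<rho> ` cq_atoms q)"

definition admissible_renaming :: "(nat \<Rightarrow> nat) \<Rightarrow> 'r cq \<Rightarrow> 'r cq \<Rightarrow> bool" where
  "admissible_renaming \<rho> q1 q2 \<longleftrightarrow> inj_on \<rho> (vars q2) \<and> map \<rho> (cq_ans q2) = cq_ans q1"

definition sym_diff :: "'a set \<Rightarrow> 'a set \<Rightarrow> 'a set" where
  "sym_diff A B = (A - B) \<union> (B - A)"

(* Cores are unique only up to isomorphism; the minimum is taken over all choices
   of core sub-examples as well (this does not change the value). *)
definition edit_dist :: "'r cq \<Rightarrow> 'r cq \<Rightarrow> nat" where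
  "edit_dist q1 q2 = (LEAST d. \<exists>\<rho> C1 C2. admissible_renaming \<rho> q1 q2
       \<and> core_of_cq C1 q1 \<and> core_of_cq C2 (rename_cq \<rho> q2)
       \<and> d = card (sym_diff C1 C2))"

definition edit_prox :: "'r cq \<Rightarrow> 'r cq \<Rightarrow> 'r cq \<Rightarrow> bool" where
  "edit_prox q q' q'' \<longleftrightarrow> edit_dist q q' \<le> edit_dist q q''"

definition answers :: "'r cq \<Rightarrow> 'r fact set \<Rightarrow> nat list set" where
  "answers q I = {map h (cq_ans q) | h. map_fact h ` cq_atoms q \<subseteq> I}"

definition cq_equiv :: "('r \<Rightarrow> nat) \<Rightarrow> 'r cq \<Rightarrow> 'r cq \<Rightarrow> bool" where
  "cq_equiv ar q1 q2 \<longleftrightarrow> (\<forall>I. wf_instance ar I \<longrightarrow> answers q1 I = answers q2 I)"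

(* Generic notions for a proximity pre-order P (P q q' q'' means q' \<preceq>_q q''),
   over the CQs of the same arity as the reference query q. *)
definition prox_minimal :: "('r cq \<Rightarrow> 'r cq \<Rightarrow> 'r cq \<Rightarrow> bool) \<Rightarrow> 'r cq \<Rightarrow> 'r cq set \<Rightarrow> 'r cq \<Rightarrow> bool" where
  "prox_minimal P q S m \<longleftrightarrow> m \<in> S \<and> \<not> (\<exists>m'\<in>S. P q m' m \<and> \<not> P q m m')"

definition prox_well_founded :: "('r \<Rightarrow> nat) \<Rightarrow> ('r cq \<Rightarrow> 'r cq \<Rightarrow> 'r cq \<Rightarrow> bool) \<Rightarrow> bool" where
  "prox_well_founded ar P \<longleftrightarrow> (\<forall>q S. is_cq ar q
      \<longrightarrow> S \<subseteq> {q'. is_cq ar q' \<and> arity q' = arity q} \<longrightarrow> S \<noteq> {}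
      \<longrightarrow> (\<exists>m. prox_minimal P q S m))"

definition prox_finite_basis :: "('r \<Rightarrow> nat) \<Rightarrow> ('r cq \<Rightarrow> 'r cq \<Rightarrow> 'r cq \<Rightarrow> bool) \<Rightarrow> bool" where
  "prox_finite_basis ar P \<longleftrightarrow> (\<forall>q S. is_cq ar q
      \<longrightarrow> S \<subseteq> {q'. is_cq ar q' \<and> arity q' = arity q}
      \<longrightarrow> (\<exists>F. finite F \<and> F \<subseteq> {m. prox_minimal P q S m}
              \<and> (\<forall>m. prox_minimal P q S m \<longrightarrow> (\<exists>f\<in>F. cq_equiv ar m f))))"

end

theory Submission
  imports Defs
begin

lemma cq_ans_pair[simp]: "cq_ans (a, C) = a" by (simp add: cq_ans_def)
lemma cq_atoms_pair[simp]: "cq_atoms (a, C) = C" by (simp add: cq_atoms_def)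
lemma cq_ans_rename[simp]: "cq_ans (rename_cq s Q) = map s (cq_ans Q)"
  by (simp add: rename_cq_def)
lemma cq_atoms_rename[simp]: "cq_atoms (rename_cq s Q) = map_fact s ` cq_atoms Q"
  by (simp add: rename_cq_def)

lemma map_fact_comp: "map_fact h (map_fact g f) = map_fact (h \<circ> g) f"
  by (simp add: map_fact_def)

lemma answers_rename:
  assumes "inj_on s (vars Q)"
  shows "answers (rename_cq s Q) I = answers Q I"
proof
  show "answers (rename_cq s Q) I \<subseteq> answers Q I"
  proof
    fix t assume "t \<in> answers (rename_cq s Q) I"
    then obtain h where t: "t = map h (map s (cq_ans Q))"
      and h: "map_fact h ` map_fact s ` cq_atoms Q \<subseteq> I"
      by (auto simp: answers_def)
    have "map_fact (h \<circ> s) ` cq_atoms Q \<subseteq> I" using h by (auto simp: map_fact_comp[symmetric])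
    moreover have "t = map (h \<circ> s) (cq_ans Q)" using t by simp
    ultimately show "t \<in> answers Q I" unfolding answers_def by blast
  qed
  show "answers Q I \<subseteq> answers (rename_cq s Q) I"
  proof
    fix t assume "t \<in> answers Q I"
    then obtain h where t: "t = map h (cq_ans Q)" and h: "map_fact h ` cq_atoms Q \<subseteq> I"
      by (auto simp: answers_def)
    define h' where "h' = h \<circ> inv_into (vars Q) s"
    have hv: "h' (s v) = h v" if "v \<in> vars Q" for v using assms that by (simp add: h'_def)
    have 1: "map h' (map s (cq_ans Q)) = t" using t hv by (auto simp: vars_def)
    have 2: "map_fact h' (map_fact s f) = map_fact h f" if "f \<in> cq_atoms Q" for f
      using hv that by (auto simp: map_fact_def vars_def)
    have "map_fact h' ` cq_atoms (rename_cq s Q) \<subseteq> I" using 2 h by auto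
    then show "t \<in> answers (rename_cq s Q) I" unfolding answers_def using 1 by auto
  qed
qed

lemma answers_core:
  assumes "is_core_of C I0 a"
  shows "answers (a, C) I = answers (a, I0) I"
proof -
  from assms have sub: "C \<subseteq> I0" and "hom_equiv C a I0 a" by (auto simp: is_core_of_def)
  then obtain g where g: "map g a = a" "map_fact g ` I0 \<subseteq> C"
    by (auto simp: hom_equiv_def is_hom_def)
  show ?thesis
  proof
    show "answers (a, C) I \<subseteq> answers (a, I0) I"
    proof
      fix t assume "t \<in> answers (a, C) I"
      then obtain h where t: "t = map h a" and h: "map_fact h ` C \<subseteq> I"
        by (auto simp: answers_def)
      have "map_fact (h \<circ> g) ` I0 \<subseteq> I" using h g(2) by (force simp: map_fact_comp[symmetric])
      moreover have "map (h \<circ> g) a = t" using t g(1) by (metis map_map)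
      ultimately show "t \<in> answers (a, I0) I" unfolding answers_def by auto
    qed
    show "answers (a, I0) I \<subseteq> answers (a, C) I"
      using sub unfolding answers_def by auto
  qed
qed

lemma core_exists:
  assumes "finite I"
  shows "\<exists>C. is_core_of C I a"
proof -
  let ?P = "\<lambda>C. C \<subseteq> I \<and> hom_equiv C a I a"
  have "is_hom id I a I a" by (simp add: is_hom_def map_fact_def)
  then have "?P I" by (auto simp: hom_equiv_def)
  from ex_has_least_nat[of ?P I card, OF this] obtain C where
    C: "?P C" and le: "\<forall>y. ?P y \<longrightarrow> card C \<le> card y" by blast
  have "finite C" using C assms finite_subset by blast
  have "\<not> hom_equiv C' a I a" if "C' \<subset> C" for C'
  proof
    assume "hom_equiv C' a I a"
    then have "card C \<le> card C'" using le C that by auto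
    moreover have "card C' < card C" using psubset_card_mono[OF \<open>finite C\<close> that] .
    ultimately show False by simp
  qed
  then show ?thesis using C unfolding is_core_of_def by blast
qed

lemma renaming_exists:
  fixes xs ys :: "nat list"
  assumes dx: "distinct xs" and dy: "distinct ys" and len: "length xs = length ys"
  shows "\<exists>\<rho>. inj_on \<rho> V \<and> map \<rho> ys = xs"
proof -
  define n where "n = length ys"
  define M where "M = Suc (Max (insert 0 (set xs)))"
  define ti where "ti = the_inv_into {..<n} (nth ys)"
  define \<rho> where "\<rho> v = (if v \<in> set ys then xs ! ti v else v + M)" for v
  have bij: "bij_betw (nth ys) {..<n} (set ys)" using bij_betw_nth[OF dy] n_def by simp
  then have injn: "inj_on (nth ys) {..<n}" by (simp add: bij_betw_def)
  have ti1: "ti v < n" "ys ! ti v = v" if "v \<in> set ys" for v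
    using that bij unfolding ti_def bij_betw_def
    by (metis the_inv_into_into subset_refl lessThan_iff, metis f_the_inv_into_f)
  have xsM: "x < M" if "x \<in> set xs" for x
    using that unfolding M_def by (simp add: le_imp_less_Suc)
  have "inj_on \<rho> UNIV"
  proof (rule injI)
    fix v w assume eq: "\<rho> v = \<rho> w"
    show "v = w"
    proof (cases "v \<in> set ys")
      case True
      note v = True
      show ?thesis
      proof (cases "w \<in> set ys")
        case True
        then have "xs ! ti v = xs ! ti w" using eq v by (simp add: \<rho>_def)
        then have "ti v = ti w" using nth_eq_iff_index_eq[OF dx] ti1 v True len n_def by auto
        then show ?thesis using ti1 v True by metis
      next
        case False
        have "xs ! ti v < M" using xsM ti1(1)[OF v] len n_def by simp
        then show ?thesis using eq v False by (simp add: \<rho>_def)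
      qed
    next
      case False
      note v = False
      show ?thesis
      proof (cases "w \<in> set ys")
        case True
        have "xs ! ti w < M" using xsM ti1(1)[OF True] len n_def by simp
        then show ?thesis using eq v True by (simp add: \<rho>_def)
      next
        case False
        then show ?thesis using eq v by (simp add: \<rho>_def)
      qed
    qed
  qed
  moreover have "map \<rho> ys = xs"
  proof (rule nth_equalityI)
    show "length (map \<rho> ys) = length xs" using len by simp
    fix i assume "i < length (map \<rho> ys)"
    then have i: "i < n" using n_def by simp
    have "ti (ys ! i) = i" unfolding ti_def using the_inv_into_f_f[OF injn] i by simp
    then show "map \<rho> ys ! i = xs ! i" using i n_def by (simp add: \<rho>_def)
  qed
  ultimately show ?thesis using inj_on_subset[OF _ subset_UNIV] by blast
qed

lemma finite_vars:
  assumes "is_cq ar m" shows "finite (vars m)"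
  using assms by (auto simp: is_cq_def wf_instance_def vars_def)

lemma edit_dist_witness:
  assumes "is_cq ar q" "is_cq ar m" "arity m = arity q"
  shows "\<exists>\<rho> C1 C2. admissible_renaming \<rho> q m \<and> core_of_cq C1 q \<and> core_of_cq C2 (rename_cq \<rho> m)
       \<and> edit_dist q m = card (sym_diff C1 C2)"
proof -
  let ?P = "\<lambda>d. \<exists>\<rho> C1 C2. admissible_renaming \<rho> q m
       \<and> core_of_cq C1 q \<and> core_of_cq C2 (rename_cq \<rho> m)
       \<and> d = card (sym_diff C1 C2)"
  obtain \<rho> where r: "inj_on \<rho> (vars m)" "map \<rho> (cq_ans m) = cq_ans q"
    using renaming_exists[of "cq_ans q" "cq_ans m" "vars m"] assms
    by (auto simp: is_cq_def arity_def)
  have "finite (cq_atoms q)" using assms by (auto simp: is_cq_def wf_instance_def)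
  then obtain C1 where C1: "core_of_cq C1 q" using core_exists by (auto simp: core_of_cq_def)
  have "finite (cq_atoms (rename_cq \<rho> m))" using assms by (auto simp: is_cq_def wf_instance_def)
  then obtain C2 where C2: "core_of_cq C2 (rename_cq \<rho> m)"
    using core_exists by (auto simp: core_of_cq_def)
  have "?P (card (sym_diff C1 C2))" using r C1 C2 by (auto simp: admissible_renaming_def)
  then have "?P (LEAST d. ?P d)" by (rule LeastI)
  then show ?thesis unfolding edit_dist_def by blast
qed

lemma finite_cover:
  fixes ar :: "'r::finite \<Rightarrow> nat"
  assumes q: "is_cq ar q"
  shows "\<exists>G. finite G \<and> (\<forall>m. is_cq ar m \<and> arity m = arity q \<and> edit_dist q m \<le> B
     \<longrightarrow> (\<exists>g\<in>G. \<forall>I. answers m I = answers g I))"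
proof -
  define A where "A = set (cq_ans q)"
  define mx where "mx = Max (range ar)"
  define K1 where "K1 = (card (cq_atoms q) + B) * mx"
  define M where "M = Suc (Max (insert 0 A)) + card A + K1"
  define U :: "'r fact set" where "U = UNIV \<times> {xs. set xs \<subseteq> {..<M} \<and> length xs \<le> mx}"
  define G where "G = (\<lambda>D. (cq_ans q, D)) ` Pow U"
  have finA: "finite A" by (simp add: A_def)
  have AM: "A \<subseteq> {..<M}"
  proof
    fix x assume "x \<in> A"
    then have "x \<le> Max (insert 0 A)" using finA by simp
    then show "x \<in> {..<M}" by (simp add: M_def)
  qed
  have cardMA: "card ({..<M} - A) \<ge> K1"
    using AM finA by (simp add: card_Diff_subset M_def)
  have "finite U" unfolding U_def by (intro finite_cartesian_product finite_lists_length_le) auto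
  then have finG: "finite G" unfolding G_def by simp
  have "\<exists>g\<in>G. \<forall>I. answers m I = answers g I"
    if m: "is_cq ar m" "arity m = arity q" "edit_dist q m \<le> B" for m
  proof -
    obtain \<rho> C1 C2 where adm: "admissible_renaming \<rho> q m" and C1: "core_of_cq C1 q"
      and C2: "core_of_cq C2 (rename_cq \<rho> m)" and d: "edit_dist q m = card (sym_diff C1 C2)"
      using edit_dist_witness[OF q m(1,2)] by blast
    have C1s: "C1 \<subseteq> cq_atoms q" using C1 by (simp add: core_of_cq_def is_core_of_def)
    have C2s: "C2 \<subseteq> map_fact \<rho> ` cq_atoms m" using C2 by (simp add: core_of_cq_def is_core_of_def)
    have finq: "finite (cq_atoms q)" using q by (auto simp: is_cq_def wf_instance_def)
    have finm: "finite (cq_atoms m)" using m by (auto simp: is_cq_def wf_instance_def)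
    have fin1: "finite C1" using C1s finq finite_subset by blast
    have fin2: "finite C2" using C2s finm finite_subset by blast
    have "card C2 \<le> card (C1 \<union> (C2 - C1))" by (rule card_mono) (use fin1 fin2 in auto)
    also have "\<dots> \<le> card C1 + card (C2 - C1)" by (rule card_Un_le)
    also have "card (C2 - C1) \<le> card (sym_diff C1 C2)"
      by (rule card_mono) (use fin1 fin2 in \<open>auto simp: sym_diff_def\<close>)
    also have "card C1 \<le> card (cq_atoms q)" using C1s finq by (rule card_mono[rotated])
    finally have cC2: "card C2 \<le> card (cq_atoms q) + B" using d m(3) by simp
    have lenC2: "length (snd f) \<le> mx" if fC: "f \<in> C2" for f
    proof -
      obtain f0 where f0: "f0 \<in> cq_atoms m" "f = map_fact \<rho> f0" using C2s fC by blast
      have "length (snd f0) = ar (fst f0)" using m(1) f0(1)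
        by (auto simp: is_cq_def wf_instance_def wf_fact_def)
      moreover have "ar (fst f0) \<le> mx" unfolding mx_def by (rule Max_ge) auto
      ultimately show ?thesis using f0(2) by (simp add: map_fact_def)
    qed
    define W where "W = (\<Union>f\<in>C2. set (snd f))"
    have finW: "finite W" using fin2 by (simp add: W_def)
    have "card W \<le> (\<Sum>f\<in>C2. card (set (snd f)))" unfolding W_def using fin2 by (rule card_UN_le)
    also have "\<dots> \<le> (\<Sum>f\<in>C2. mx)"
      by (rule sum_mono) (meson card_length le_trans lenC2)
    also have "\<dots> = card C2 * mx" by simp
    also have "\<dots> \<le> K1" unfolding K1_def using cC2 by simp
    finally have cW: "card (W - A) \<le> card ({..<M} - A)"
      using cardMA card_mono[OF finW, of "W - A"] by auto
    obtain f0 where f0: "f0 ` (W - A) \<subseteq> {..<M} - A" "inj_on f0 (W - A)"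
      using card_le_inj[OF _ _ cW] finW by auto
    define \<sigma> where "\<sigma> v = (if v \<in> A then v else f0 v)" for v
    define Q2 where "Q2 = (cq_ans q, C2)"
    have vQ2: "vars Q2 = A \<union> W" by (auto simp: Q2_def vars_def A_def W_def)
    have injs: "inj_on \<sigma> (A \<union> W)"
    proof (rule inj_onI)
      fix v w assume v: "v \<in> A \<union> W" and w: "w \<in> A \<union> W" and eq: "\<sigma> v = \<sigma> w"
      show "v = w"
      proof (cases "v \<in> A"; cases "w \<in> A")
        assume "v \<in> A" "w \<notin> A" then show ?thesis using eq f0(1) w by (auto simp: \<sigma>_def)
      next
        assume "v \<notin> A" "w \<in> A" then show ?thesis using eq f0(1) v by (auto simp: \<sigma>_def)
      next
        assume "v \<notin> A" "w \<notin> A" then show ?thesis using eq f0(2) v w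
          by (auto simp: \<sigma>_def inj_on_def)
      qed (use eq in \<open>auto simp: \<sigma>_def\<close>)
    qed
    have ans_rm: "cq_ans (rename_cq \<rho> m) = cq_ans q" using adm by (simp add: admissible_renaming_def)
    have "answers m I = answers (rename_cq \<sigma> Q2) I" for I
    proof -
      have "answers m I = answers (rename_cq \<rho> m) I"
        using answers_rename[of \<rho> m I] adm by (simp add: admissible_renaming_def)
      also have "\<dots> = answers (cq_ans (rename_cq \<rho> m), cq_atoms (rename_cq \<rho> m)) I"
        by (simp add: cq_ans_def cq_atoms_def)
      also have "\<dots> = answers Q2 I"
        using answers_core[of C2 "cq_atoms (rename_cq \<rho> m)" "cq_ans (rename_cq \<rho> m)" I] C2 ans_rm
        by (simp add: core_of_cq_def Q2_def)
      also have "\<dots> = answers (rename_cq \<sigma> Q2) I"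
        using answers_rename[of \<sigma> Q2 I] injs vQ2 by simp
      finally show ?thesis .
    qed
    moreover have "rename_cq \<sigma> Q2 \<in> G"
    proof -
      have "map \<sigma> (cq_ans q) = cq_ans q"
        by (rule map_idI) (simp add: \<sigma>_def A_def)
      moreover have "map_fact \<sigma> ` C2 \<subseteq> U"
      proof
        fix g assume "g \<in> map_fact \<sigma> ` C2"
        then obtain f where f: "f \<in> C2" "g = map_fact \<sigma> f" by auto
        have "set (map \<sigma> (snd f)) \<subseteq> {..<M}"
        proof
          fix y assume "y \<in> set (map \<sigma> (snd f))"
          then obtain v where v: "v \<in> set (snd f)" "y = \<sigma> v" by auto
          have "v \<in> W" using v f by (auto simp: W_def)
          then show "y \<in> {..<M}" using v AM f0(1) by (auto simp: \<sigma>_def)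
        qed
        then show "g \<in> U" using f lenC2[OF f(1)] by (simp add: U_def map_fact_def)
      qed
      ultimately show ?thesis unfolding G_def rename_cq_def Q2_def by auto
    qed
    ultimately show ?thesis by blast
  qed
  then show ?thesis using finG by blast
qed

theorem proposition34:
  fixes ar :: "'r::finite \<Rightarrow> nat"
  shows "prox_well_founded ar edit_prox \<and> prox_finite_basis ar edit_prox"
proof
  show "prox_well_founded ar edit_prox"
    unfolding prox_well_founded_def
  proof (intro allI impI)
    fix q and S :: "'r cq set"
    assume "S \<noteq> {}"
    then obtain s where "s \<in> S" by auto
    from ex_has_least_nat[of "\<lambda>x. x \<in> S" s "edit_dist q", OF this] obtain m where
      "m \<in> S" "\<forall>y. y \<in> S \<longrightarrow> edit_dist q m \<le> edit_dist q y" by blast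
    then have "prox_minimal edit_prox q S m"
      unfolding prox_minimal_def edit_prox_def by blast
    then show "\<exists>m. prox_minimal edit_prox q S m" by blast
  qed
  show "prox_finite_basis ar edit_prox"
    unfolding prox_finite_basis_def
  proof (intro allI impI)
    fix q and S :: "'r cq set"
    assume q: "is_cq ar q" and S: "S \<subseteq> {q'. is_cq ar q' \<and> arity q' = arity q}"
    define Mn where "Mn = {m. prox_minimal edit_prox q S m}"
    show "\<exists>F. finite F \<and> F \<subseteq> Mn \<and> (\<forall>m. prox_minimal edit_prox q S m \<longrightarrow> (\<exists>f\<in>F. cq_equiv ar m f))"
    proof (cases "Mn = {}")
      case True
      then show ?thesis by (auto simp: Mn_def)
    next
      case False
      then obtain m0 where m0: "m0 \<in> Mn" by auto
      define B where "B = edit_dist q m0"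
      have bnd: "m \<in> Mn \<Longrightarrow> is_cq ar m \<and> arity m = arity q \<and> edit_dist q m \<le> B" for m
        using m0 S unfolding Mn_def B_def prox_minimal_def edit_prox_def by force
      obtain G where G: "finite G" "\<forall>m. is_cq ar m \<and> arity m = arity q \<and> edit_dist q m \<le> B
         \<longrightarrow> (\<exists>g\<in>G. \<forall>I. answers m I = answers g I)"
        using finite_cover[OF q, of B] by blast
      define G' where "G' = {g \<in> G. \<exists>m\<in>Mn. \<forall>I. answers m I = answers g I}"
      define ch where "ch g = (SOME m. m \<in> Mn \<and> (\<forall>I. answers m I = answers g I))" for g
      have ch: "ch g \<in> Mn \<and> (\<forall>I. answers (ch g) I = answers g I)" if "g \<in> G'" for g
        using that unfolding G'_def ch_def by (metis (mono_tags, lifting) mem_Collect_eq someI_ex)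
      have "finite (ch ` G')" using G(1) by (simp add: G'_def)
      moreover have "ch ` G' \<subseteq> Mn" using ch by auto
      moreover have "\<exists>f\<in>ch ` G'. cq_equiv ar m f" if "prox_minimal edit_prox q S m" for m
      proof -
        have mM: "m \<in> Mn" using that by (simp add: Mn_def)
        then obtain g where g: "g \<in> G" "\<forall>I. answers m I = answers g I" using G(2) bnd by blast
        then have "g \<in> G'" using mM by (auto simp: G'_def)
        then show ?thesis using ch g by (auto simp: cq_equiv_def)
      qed
      ultimately show ?thesis by blast
    qed
  qed
qed

end
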